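(* For every $f\in\mathbb X_1$ and every $\eta\in\mathbb R$, the limit $\lim_{\varepsilon\to0^+}\mathsf R_{\varepsilon+i\eta}f$ exists in $\mathbb X_0$ and equals $\mathsf R_{i\eta}f$. Moreover, if $k\ge0$ and $f\in\mathbb X_{k+1}$, then $\mathsf R_{i\eta}f\in\mathbb X_k$ and $\lim_{\varepsilon\to0^+}\|\mathsf R_{\varepsilon+i\eta}f-\mathsf R_{i\eta}f\|_{\mathbb X_k}=0$.
   Context: Let $d\ge2$, $\Omega\subset\mathbb R^d$ bounded open with $\mathcal C^1$ boundary. Let $\bm m$ be a nonnegative Borel measure on $\mathbb R^d$ with support $V$, $\bm m(\{0\})=0$. For $k\in\mathbb N$, $\mathbb X_k=L^1(\Omega\times V,\max(1,|v|^{-k})\,\mathrm dx\,\bm m(\mathrm dv))$ with its natural norm. Let $t_-(x,v)=\inf\{s>0:x-sv\notin\Omega\}$ and, for $\mathrm{Re}\lambda\ge0$, $\mathsf R_\lambda f(x,v)=\int_0^{t_-(x,v)}f(x-sv,v)e^{-\lambda s}\mathrm ds$, $(x,v)\in\Omega\times V$ (for $\mathrm{Re}\lambda>0$, $\mathsf R_\lambda=(\lambda-\mathsf T_0)^{-1}$, the resolvent of free transport with absorbing boundary). *)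

theory Defs
  imports "HOL-Analysis.Analysis"
begin

text \<open>C^1 boundary: near every boundary point, after an orthogonal change of
coordinates, the domain is the strict epigraph of a C^1 function of the
remaining coordinates (here: a C^1 function g not depending on coordinate i).\<close>
definition C1_boundary :: "(real^'n) set \<Rightarrow> bool" where
  "C1_boundary \<Omega> \<longleftrightarrow>
    (\<forall>x0\<in>frontier \<Omega>. \<exists>r>0. \<exists>T i. \<exists>g :: real^'n \<Rightarrow> real. \<exists>G :: real^'n \<Rightarrow> real^'n.
        orthogonal_transformation T \<and>
        (\<forall>y z. (\<forall>j. j \<noteq> i \<longrightarrow> y$j = z$j) \<longrightarrow> g y = g z) \<and>
        (\<forall>y. (g has_derivative (\<lambda>h. G y \<bullet> h)) (at y)) \<and> continuous_on UNIV G \<and>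
        \<Omega> \<inter> ball x0 r = {x \<in> ball x0 r. g (T x) < (T x)$i})"

definition msupport :: "'a::topological_space measure \<Rightarrow> 'a set" where
  "msupport m = {v. \<forall>U. open U \<and> v \<in> U \<longrightarrow> emeasure m U > 0}"

text \<open>Weight max(1,|v|^{-k}) (at v = 0, a null set, it is taken to be 1).\<close>
definition wt :: "nat \<Rightarrow> real^'n \<Rightarrow> real" where
  "wt k v = max 1 (1 / norm v ^ k)"

definition inX :: "(real^'n) set \<Rightarrow> (real^'n) measure \<Rightarrow> nat \<Rightarrow> ((real^'n) \<times> (real^'n) \<Rightarrow> complex) \<Rightarrow> bool" where
  "inX \<Omega> m k f \<longleftrightarrow> f \<in> borel_measurable (lborel \<Otimes>\<^sub>M m) \<and>
     (\<integral>\<^sup>+ z. indicator (\<Omega> \<times> msupport m) z * ennreal (wt k (snd z) * norm (f z)) \<partial>(lborel \<Otimes>\<^sub>M m)) < \<infinity>"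

definition Xnorm :: "(real^'n) set \<Rightarrow> (real^'n) measure \<Rightarrow> nat \<Rightarrow> ((real^'n) \<times> (real^'n) \<Rightarrow> complex) \<Rightarrow> real" where
  "Xnorm \<Omega> m k f = enn2real
     (\<integral>\<^sup>+ z. indicator (\<Omega> \<times> msupport m) z * ennreal (wt k (snd z) * norm (f z)) \<partial>(lborel \<Otimes>\<^sub>M m))"

text \<open>Exit time t_-(x,v) (v = 0, a null set, is given the value 0 by convention).\<close>
definition tminus :: "(real^'n) set \<Rightarrow> real^'n \<Rightarrow> real^'n \<Rightarrow> real" where
  "tminus \<Omega> x v = (if v = 0 then 0 else Inf {s. s > 0 \<and> x - s *\<^sub>R v \<notin> \<Omega>})"

definition Rres :: "(real^'n) set \<Rightarrow> complex \<Rightarrow> ((real^'n) \<times> (real^'n) \<Rightarrow> complex) \<Rightarrow> (real^'n) \<times> (real^'n) \<Rightarrow> complex" where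
  "Rres \<Omega> lam f z = (case z of (x, v) \<Rightarrow>
     LINT s:{0<..<tminus \<Omega> x v}|lborel. f (x - s *\<^sub>R v, v) * exp (- (lam * complex_of_real s)))"

end

theory Submission
  imports Defs
begin


lemma line_bound:
  fixes \<Omega> :: "(real^'n) set" and g :: "real^'n \<Rightarrow> ennreal" and v :: "real^'n" and R :: real
  assumes Rpos: "R > 0" and R: "\<Omega> \<subseteq> ball 0 R" and v: "v \<noteq> 0" and g: "g \<in> borel_measurable borel"
    and gsupp: "\<And>y. y \<notin> \<Omega> \<Longrightarrow> g y = 0" and \<Omega>b: "\<Omega> \<in> sets borel"
  shows "(\<integral>\<^sup>+x. (\<integral>\<^sup>+s. indicator \<Omega> x * indicator {0<..} s * g (x - s *\<^sub>R v) \<partial>lborel) \<partial>lborel)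
         \<le> ennreal (2 * R / norm v) * (\<integral>\<^sup>+y. g y \<partial>lborel)"
proof -
  define c where "c = 2 * R / norm v"
  have nv: "norm v > 0" using v by simp
  have R0: "R \<ge> 0" using Rpos by simp
  have c0: "c \<ge> 0" unfolding c_def using R0 nv by simp
  have sLL: "sets (lborel \<Otimes>\<^sub>M lborel) = sets (borel :: ((real^'n) \<times> real) measure)"
  proof -
    have "sets ((lborel::(real^'n) measure) \<Otimes>\<^sub>M (lborel :: real measure)) = sets ((borel::(real^'n) measure) \<Otimes>\<^sub>M (borel :: real measure))"
      by (rule sets_pair_measure_cong) simp_all
    then show ?thesis by (subst (asm) borel_prod) simp
  qed
  let ?F = "\<lambda>x (s::real). indicator \<Omega> x * indicator {0<..} s * g (x - s *\<^sub>R v) :: ennreal"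
  have gc: "(\<lambda>p :: (real^'n) \<times> real. g (fst p - snd p *\<^sub>R v)) \<in> borel_measurable borel"
    by (rule measurable_compose[OF _ g]) (intro borel_measurable_continuous_onI continuous_intros)
  have gc': "(\<lambda>p :: (real^'n) \<times> real. g (fst p - snd p *\<^sub>R v)) \<in> borel_measurable (lborel \<Otimes>\<^sub>M lborel)"
    using gc by (subst measurable_cong_sets[OF sLL refl])
  have Fm': "case_prod ?F \<in> borel_measurable (lborel \<Otimes>\<^sub>M lborel)"
    unfolding case_prod_beta'
  proof -
    note [measurable] = gc' \<Omega>b
    show "(\<lambda>p :: (real^'n) \<times> real. ?F (fst p) (snd p)) \<in> borel_measurable (lborel \<Otimes>\<^sub>M lborel)" by measurable
  qed
  have "(\<integral>\<^sup>+x. (\<integral>\<^sup>+s. ?F x s \<partial>lborel) \<partial>lborel) = (\<integral>\<^sup>+s. (\<integral>\<^sup>+x. ?F x s \<partial>lborel) \<partial>lborel)"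
    by (rule lborel_pair.Fubini'[OF Fm', symmetric])
  also have "\<dots> = (\<integral>\<^sup>+s. (\<integral>\<^sup>+y. ?F (s *\<^sub>R v + y) s \<partial>lborel) \<partial>lborel)"
  proof (rule nn_integral_cong)
    fix s :: real
    have m1: "(\<lambda>x. ?F x s) \<in> borel_measurable borel"
    proof -
      note [measurable] = g \<Omega>b
      show ?thesis by measurable
    qed
    have "(\<integral>\<^sup>+x. ?F x s \<partial>lborel) = (\<integral>\<^sup>+x. ?F x s \<partial>(distr lborel borel ((+) (s *\<^sub>R v))))"
      by (simp add: lborel_distr_plus)
    also have "\<dots> = (\<integral>\<^sup>+y. ?F (s *\<^sub>R v + y) s \<partial>lborel)"
      by (rule nn_integral_distr) (use m1 in simp_all)
    finally show "(\<integral>\<^sup>+x. ?F x s \<partial>lborel) = (\<integral>\<^sup>+y. ?F (s *\<^sub>R v + y) s \<partial>lborel)" .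
  qed
  also have "\<dots> \<le> (\<integral>\<^sup>+s. (\<integral>\<^sup>+y. indicator {0<..<c} s * g y \<partial>lborel) \<partial>lborel)"
  proof (intro nn_integral_mono)
    fix s :: real and y :: "real^'n"
    show "?F (s *\<^sub>R v + y) s \<le> indicator {0<..<c} s * g y"
    proof (cases "g y = 0 \<or> s \<le> 0 \<or> s *\<^sub>R v + y \<notin> \<Omega>")
      case True
      then show ?thesis by (auto simp: indicator_def)
    next
      case False
      then have y: "y \<in> \<Omega>" and s: "s > 0" and sy: "s *\<^sub>R v + y \<in> \<Omega>" using gsupp by auto
      have "norm y < R" "norm (s *\<^sub>R v + y) < R" using y sy R by auto
      moreover have "norm (s *\<^sub>R v) \<le> norm (s *\<^sub>R v + y) + norm y"
        using norm_triangle_ineq4[of "s *\<^sub>R v + y" y] by simp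
      moreover have "norm (s *\<^sub>R v) = s * norm v" using s by simp
      ultimately have "s * norm v < 2 * R" by linarith
      then have "s < c" unfolding c_def using nv by (simp add: field_simps)
      then show ?thesis using s y sy by (simp add: indicator_def)
    qed
  qed
  also have "\<dots> = (\<integral>\<^sup>+s. (\<integral>\<^sup>+y. g y \<partial>lborel) * indicator {0<..<c} s \<partial>lborel)"
  proof (intro nn_integral_cong)
    fix s :: real
    have gl: "g \<in> borel_measurable lborel" using g by simp
    show "(\<integral>\<^sup>+y. indicator {0<..<c} s * g y \<partial>lborel) = (\<integral>\<^sup>+y. g y \<partial>lborel) * indicator {0<..<c} s"
      using nn_integral_cmult[OF gl, of "indicator {0<..<c} s"] by (metis mult.commute)
  qed
  also have "\<dots> = (\<integral>\<^sup>+y. g y \<partial>lborel) * ennreal c"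
    by (subst nn_integral_cmult_indicator) (use c0 in simp_all)
  finally show ?thesis unfolding c_def by (simp add: mult.commute)
qed

lemma line_F_meas:
  fixes \<Omega> :: "(real^'n) set" and g :: "real^'n \<Rightarrow> ennreal" and v :: "real^'n"
  assumes g: "g \<in> borel_measurable borel" and \<Omega>b: "\<Omega> \<in> sets borel"
  shows "(\<lambda>x. \<integral>\<^sup>+s. indicator \<Omega> x * indicator {0<..} s * g (x - s *\<^sub>R v) \<partial>lborel) \<in> borel_measurable borel"
proof -
  have sLL: "sets (lborel \<Otimes>\<^sub>M lborel) = sets (borel :: ((real^'n) \<times> real) measure)"
  proof -
    have "sets ((lborel::(real^'n) measure) \<Otimes>\<^sub>M (lborel :: real measure)) = sets ((borel::(real^'n) measure) \<Otimes>\<^sub>M (borel :: real measure))"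
      by (rule sets_pair_measure_cong) simp_all
    then show ?thesis by (subst (asm) borel_prod) simp
  qed
  let ?F = "\<lambda>x (s::real). indicator \<Omega> x * indicator {0<..} s * g (x - s *\<^sub>R v) :: ennreal"
  have gc: "(\<lambda>p :: (real^'n) \<times> real. g (fst p - snd p *\<^sub>R v)) \<in> borel_measurable borel"
    by (rule measurable_compose[OF _ g]) (intro borel_measurable_continuous_onI continuous_intros)
  have gc': "(\<lambda>p :: (real^'n) \<times> real. g (fst p - snd p *\<^sub>R v)) \<in> borel_measurable (lborel \<Otimes>\<^sub>M lborel)"
    using gc by (subst measurable_cong_sets[OF sLL refl])
  have Fm': "case_prod ?F \<in> borel_measurable (lborel \<Otimes>\<^sub>M lborel)"
    unfolding case_prod_beta'
  proof -
    note [measurable] = gc' \<Omega>b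
    show "(\<lambda>p :: (real^'n) \<times> real. ?F (fst p) (snd p)) \<in> borel_measurable (lborel \<Otimes>\<^sub>M lborel)" by measurable
  qed
  have "(\<lambda>x. \<integral>\<^sup>+s. ?F x s \<partial>lborel) \<in> borel_measurable lborel"
    by (rule lborel.borel_measurable_nn_integral) (use Fm' in simp)
  then show ?thesis by simp
qed

definition Ifun :: "(real^'n) set \<Rightarrow> ((real^'n) \<times> (real^'n) \<Rightarrow> complex) \<Rightarrow> (real^'n) \<times> (real^'n) \<Rightarrow> ennreal" where
  "Ifun \<Omega> f z = (\<integral>\<^sup>+s. ennreal (indicator {0<..<tminus \<Omega> (fst z) (snd z)} s * norm (f (fst z - s *\<^sub>R snd z, snd z))) \<partial>lborel)"

definition Kset :: "(real^'n) set \<Rightarrow> nat \<Rightarrow> real \<Rightarrow> ((real^'n) \<times> (real^'n)) set" where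
  "Kset \<Omega> j q = {y. \<exists>s'. s' \<in> {inverse (real (Suc j)) .. q - inverse (real (Suc j))} \<and> fst y - s' *\<^sub>R snd y \<notin> \<Omega>}"

context
  fixes \<Omega> :: "(real^'n) set" and m :: "(real^'n) measure"
  assumes bnd: "bounded \<Omega>" and opn: "open \<Omega>" and sm: "sets m = sets borel"
    and cpt: "\<And>K. compact K \<Longrightarrow> emeasure m K < \<infinity>"
begin

lemma space_m: "space m = UNIV"
  using sets_eq_imp_space_eq[OF sm] by simp

lemma sets_Nm: "sets (lborel \<Otimes>\<^sub>M m) = sets (borel :: ((real^'n) \<times> (real^'n)) measure)"
proof -
  have "sets (lborel \<Otimes>\<^sub>M m) = sets ((borel::(real^'n) measure) \<Otimes>\<^sub>M (borel::(real^'n) measure))"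
    by (rule sets_pair_measure_cong) (simp_all add: sm)
  then show ?thesis by (subst (asm) borel_prod) simp
qed

lemma sf_m: "sigma_finite_measure m"
proof
  show "\<exists>A. countable A \<and> A \<subseteq> sets m \<and> \<Union>A = space m \<and> (\<forall>a\<in>A. emeasure m a \<noteq> \<infinity>)"
  proof (intro exI[of _ "range (\<lambda>n::nat. cball 0 (real n))"] conjI)
    show "range (\<lambda>n::nat. cball (0::real^'n) (real n)) \<subseteq> sets m" unfolding sm by (auto intro: borel_closed)
    show "\<Union> (range (\<lambda>n::nat. cball (0::real^'n) (real n))) = space m"
      unfolding space_m
    proof (intro set_eqI iffI)
      fix x :: "real^'n"
      obtain n :: nat where "norm x \<le> real n" using real_arch_simple by blast
      then show "x \<in> \<Union> (range (\<lambda>n::nat. cball (0::real^'n) (real n)))" by (auto simp: mem_cball_0)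
    qed simp
    show "\<forall>a\<in>range (\<lambda>n::nat. cball (0::real^'n) (real n)). emeasure m a \<noteq> \<infinity>"
      using cpt[OF compact_cball] by (auto simp: less_top[symmetric])
  qed simp
qed

lemma tm_nonempty:
  assumes "v \<noteq> 0" shows "{s. s > 0 \<and> x - s *\<^sub>R v \<notin> \<Omega>} \<noteq> {}"
proof -
  obtain R where R: "R > 0" "\<Omega> \<subseteq> ball 0 R" using bounded_subset_ballD[OF bnd, of 0] by auto
  define s where "s = (R + norm x) / norm v + 1"
  have nv: "norm v > 0" using assms by simp
  have s0: "s > 0" unfolding s_def using R nv by (simp add: add_pos_nonneg)
  have "s * norm v = R + norm x + norm v" unfolding s_def using nv by (simp add: field_simps)
  moreover have "norm (s *\<^sub>R v) \<le> norm x + norm (x - s *\<^sub>R v)"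
    using norm_triangle_ineq[of x "s *\<^sub>R v - x"] by (simp add: norm_minus_commute)
  moreover have "norm (s *\<^sub>R v) = s * norm v" using s0 by simp
  ultimately have "norm (x - s *\<^sub>R v) \<ge> R" using nv by linarith
  then have "x - s *\<^sub>R v \<notin> \<Omega>" using R by auto
  then show ?thesis using s0 by auto
qed

lemma tm_nonneg: "0 \<le> tminus \<Omega> x v"
proof (cases "v = 0")
  case False
  have "0 \<le> Inf {s. s > 0 \<and> x - s *\<^sub>R v \<notin> \<Omega>}"
  proof (rule cInf_greatest)
    show "{s. s > 0 \<and> x - s *\<^sub>R v \<notin> \<Omega>} \<noteq> {}" by (rule tm_nonempty[OF False])
  qed simp
  then show ?thesis using False unfolding tminus_def by simp
qed (simp add: tminus_def)

lemma tm_mem: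
  assumes "0 < s" "s < tminus \<Omega> x v" shows "x - s *\<^sub>R v \<in> \<Omega>" "v \<noteq> 0"
proof -
  show v: "v \<noteq> 0" using assms unfolding tminus_def by (auto split: if_splits)
  show "x - s *\<^sub>R v \<in> \<Omega>"
  proof (rule ccontr)
    assume "x - s *\<^sub>R v \<notin> \<Omega>"
    then have "s \<in> {s. s > 0 \<and> x - s *\<^sub>R v \<notin> \<Omega>}" using assms(1) by simp
    moreover have "bdd_below {s. s > 0 \<and> x - s *\<^sub>R v \<notin> \<Omega>}"
      by (rule bdd_belowI[of _ 0]) simp
    ultimately have "Inf {s. s > 0 \<and> x - s *\<^sub>R v \<notin> \<Omega>} \<le> s" by (rule cInf_lower)
    then have "tminus \<Omega> x v \<le> s" unfolding tminus_def using v by simp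
    then show False using assms by simp
  qed
qed

lemma tm_char:
  assumes "v \<noteq> 0"
  shows "s < tminus \<Omega> x v \<longleftrightarrow> (\<exists>r::rat. s < of_rat r \<and> (\<forall>s'. 0 < s' \<and> s' < of_rat r \<longrightarrow> x - s' *\<^sub>R v \<in> \<Omega>))"
proof
  let ?S = "{s. s > 0 \<and> x - s *\<^sub>R v \<notin> \<Omega>}"
  have tm: "tminus \<Omega> x v = Inf ?S" using assms unfolding tminus_def by simp
  assume "s < tminus \<Omega> x v"
  then obtain q where q: "q \<in> \<rat>" "s < q" "q < tminus \<Omega> x v" using Rats_dense_in_real by blast
  obtain r where r: "q = of_rat r" using Rats_cases[OF q(1)] by blast
  have "\<forall>s'. 0 < s' \<and> s' < of_rat r \<longrightarrow> x - s' *\<^sub>R v \<in> \<Omega>"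
  proof (intro allI impI)
    fix s' :: real assume a: "0 < s' \<and> s' < of_rat r"
    then have "s' < tminus \<Omega> x v" using q r by linarith
    then show "x - s' *\<^sub>R v \<in> \<Omega>" using tm_mem(1) a by blast
  qed
  then show "\<exists>r::rat. s < of_rat r \<and> (\<forall>s'. 0 < s' \<and> s' < of_rat r \<longrightarrow> x - s' *\<^sub>R v \<in> \<Omega>)"
    using q r by auto
next
  let ?S = "{s. s > 0 \<and> x - s *\<^sub>R v \<notin> \<Omega>}"
  have tm: "tminus \<Omega> x v = Inf ?S" using assms unfolding tminus_def by simp
  assume "\<exists>r::rat. s < of_rat r \<and> (\<forall>s'. 0 < s' \<and> s' < of_rat r \<longrightarrow> x - s' *\<^sub>R v \<in> \<Omega>)"
  then obtain r :: rat where r: "s < of_rat r" "\<forall>s'. 0 < s' \<and> s' < of_rat r \<longrightarrow> x - s' *\<^sub>R v \<in> \<Omega>" by blast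
  have "of_rat r \<le> Inf ?S"
  proof (rule cInf_greatest)
    show "?S \<noteq> {}" by (rule tm_nonempty[OF assms])
    fix s' :: real assume "s' \<in> ?S"
    then have "0 < s'" "x - s' *\<^sub>R v \<notin> \<Omega>" by auto
    then show "of_rat r \<le> s'" using r(2) not_le by blast
  qed
  then show "s < tminus \<Omega> x v" using tm r by simp
qed

lemma K_closed: "closed (Kset \<Omega> j q)"
proof -
  let ?T = "(\<lambda>p :: real \<times> ((real^'n) \<times> (real^'n)). fst (snd p) - fst p *\<^sub>R snd (snd p)) -` (- \<Omega>)"
  have cT: "closed ?T"
    by (rule continuous_closed_vimage) (use opn in \<open>auto intro!: continuous_intros\<close>)
  have "closed {y. \<exists>s'. s' \<in> {inverse (real (Suc j)) .. q - inverse (real (Suc j))} \<and> (s', y) \<in> ?T}"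
    by (rule closed_compact_projection[OF compact_Icc cT])
  then show ?thesis unfolding Kset_def by simp
qed

lemma K_mem: "(x, v) \<in> Kset \<Omega> j q \<longleftrightarrow> (\<exists>s'. inverse (real (Suc j)) \<le> s' \<and> s' \<le> q - inverse (real (Suc j)) \<and> x - s' *\<^sub>R v \<notin> \<Omega>)"
  unfolding Kset_def by auto

lemma P_eq:
  "{z :: ((real^'n) \<times> (real^'n)) \<times> real. 0 < snd z \<and> snd z < tminus \<Omega> (fst (fst z)) (snd (fst z))}
   = {z. snd (fst z) \<noteq> 0} \<inter> {z. 0 < snd z} \<inter>
     (\<Union>r::rat. {z. snd z < of_rat r} \<inter> - (\<Union>j::nat. Kset \<Omega> j (of_rat r) \<times> UNIV))"
  (is "?L = ?R")
proof (intro set_eqI iffI)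
  fix z :: "((real^'n) \<times> (real^'n)) \<times> real"
  obtain x v s where z: "z = ((x, v), s)" by (metis prod.collapse)
  {
    assume "z \<in> ?L"
    then have s: "0 < s" "s < tminus \<Omega> x v" using z by auto
    have v: "v \<noteq> 0" using tm_mem(2)[OF s] .
    obtain r :: rat where r: "s < of_rat r" "\<forall>s'. 0 < s' \<and> s' < of_rat r \<longrightarrow> x - s' *\<^sub>R v \<in> \<Omega>"
      using tm_char[OF v] s(2) by blast
    have nk: "(x, v) \<notin> Kset \<Omega> j (of_rat r)" for j
    proof
      assume "(x, v) \<in> Kset \<Omega> j (of_rat r)"
      then obtain s' :: real where s': "inverse (real (Suc j)) \<le> s'" "s' \<le> of_rat r - inverse (real (Suc j))" "x - s' *\<^sub>R v \<notin> \<Omega>"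
        unfolding K_mem by blast
      have "0 < inverse (real (Suc j))" by simp
      then have "0 < s'" "s' < of_rat r" using s' by linarith+
      then show False using r(2) s'(3) by blast
    qed
    have "z \<notin> (\<Union>j::nat. Kset \<Omega> j (of_rat r) \<times> UNIV)" unfolding z using nk by blast
    moreover have "z \<in> {z. snd z < of_rat r}" using r(1) z by simp
    ultimately have "z \<in> (\<Union>r::rat. {z. snd z < of_rat r} \<inter> - (\<Union>j::nat. Kset \<Omega> j (of_rat r) \<times> UNIV))"
      by blast
    moreover have "z \<in> {z. snd (fst z) \<noteq> 0} \<inter> {z. 0 < snd z}" using z v s by simp
    ultimately show "z \<in> ?R" by (rule IntI[rotated])
  }
  {
    assume zR: "z \<in> ?R"
    have v: "v \<noteq> 0" using IntD1[OF IntD1[OF zR]] z by simp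
    have s: "0 < s" using IntD2[OF IntD1[OF zR]] z by simp
    obtain r :: rat where zr: "z \<in> {z. snd z < of_rat r} \<inter> - (\<Union>j::nat. Kset \<Omega> j (of_rat r) \<times> UNIV)"
      using IntD2[OF zR] by blast
    have r: "s < of_rat r" using IntD1[OF zr] z by simp
    have nk: "(x, v) \<notin> Kset \<Omega> j (of_rat r)" for j
      using IntD2[OF zr] z by blast
    have "\<forall>s'. 0 < s' \<and> s' < of_rat r \<longrightarrow> x - s' *\<^sub>R v \<in> \<Omega>"
    proof (intro allI impI)
      fix s' :: real assume a: "0 < s' \<and> s' < of_rat r"
      then have "0 < min s' (of_rat r - s')" by simp
      then obtain n :: nat where n: "n > 0" "inverse (real n) < min s' (of_rat r - s')"
        using ex_inverse_of_nat_less by blast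
      then obtain j where j: "n = Suc j" using gr0_conv_Suc by blast
      have "inverse (real (Suc j)) \<le> s'" "s' \<le> of_rat r - inverse (real (Suc j))" using n j by auto
      then show "x - s' *\<^sub>R v \<in> \<Omega>" using nk[of j] unfolding K_mem by blast
    qed
    then have "s < tminus \<Omega> x v" using tm_char[OF v] r by blast
    then show "z \<in> ?L" using z s by simp
  }
qed

lemma P_borel:
  "{z :: ((real^'n) \<times> (real^'n)) \<times> real. 0 < snd z \<and> snd z < tminus \<Omega> (fst (fst z)) (snd (fst z))} \<in> sets borel"
proof -
  have A: "{z :: ((real^'n) \<times> (real^'n)) \<times> real. snd (fst z) \<noteq> 0} \<in> sets borel"
    by (intro borel_open open_Collect_neq continuous_intros)
  have B: "{z :: ((real^'n) \<times> (real^'n)) \<times> real. 0 < snd z} \<in> sets borel"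
    by (intro borel_open open_Collect_less continuous_intros)
  have C: "{z :: ((real^'n) \<times> (real^'n)) \<times> real. snd z < of_rat r} \<in> sets borel" for r
    by (intro borel_open open_Collect_less continuous_intros)
  have D: "(\<Union>j::nat. Kset \<Omega> j (of_rat r) \<times> (UNIV :: real set)) \<in> sets borel" for r :: rat
    by (intro sets.countable_UN''[OF countableI_type] borel_closed closed_Times K_closed closed_UNIV)
  have E: "(\<Union>r::rat. {z :: ((real^'n) \<times> (real^'n)) \<times> real. snd z < of_rat r} \<inter>
        - (\<Union>j::nat. Kset \<Omega> j (of_rat r) \<times> UNIV)) \<in> sets borel"
    by (intro sets.countable_UN''[OF countableI_type] sets.Int C borel_comp D)
  show ?thesis unfolding P_eq by (intro sets.Int A B E)
qed

lemma meas_conv: "measurable (lborel \<Otimes>\<^sub>M m) N = measurable (borel :: ((real^'n) \<times> (real^'n)) measure) N"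
  using sets_Nm by (intro measurable_cong_sets) auto

lemma sets_NL: "sets ((lborel \<Otimes>\<^sub>M m) \<Otimes>\<^sub>M lborel) = sets (borel :: (((real^'n) \<times> (real^'n)) \<times> real) measure)"
proof -
  have "sets ((lborel \<Otimes>\<^sub>M m) \<Otimes>\<^sub>M lborel) = sets ((borel :: ((real^'n) \<times> (real^'n)) measure) \<Otimes>\<^sub>M (borel :: real measure))"
    by (rule sets_pair_measure_cong[OF sets_Nm sets_lborel])
  then show ?thesis by (subst (asm) borel_prod) simp
qed

lemma ind_P: "indicator {0<..<tminus \<Omega> (fst z) (snd z)} s =
  indicator {z :: ((real^'n) \<times> (real^'n)) \<times> real. 0 < snd z \<and> snd z < tminus \<Omega> (fst (fst z)) (snd (fst z))} (z, s)"
  by (simp add: indicator_def)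

lemma comp_meas:
  fixes f :: "(real^'n) \<times> (real^'n) \<Rightarrow> 'b::topological_space"
  assumes f: "f \<in> borel_measurable (lborel \<Otimes>\<^sub>M m)"
  shows "(\<lambda>p :: ((real^'n) \<times> (real^'n)) \<times> real. f (fst (fst p) - snd p *\<^sub>R snd (fst p), snd (fst p))) \<in> borel_measurable borel"
proof -
  have fB: "f \<in> borel_measurable borel" using f by (simp only: meas_conv)
  have "(\<lambda>p :: ((real^'n) \<times> (real^'n)) \<times> real. (fst (fst p) - snd p *\<^sub>R snd (fst p), snd (fst p))) \<in> borel_measurable borel"
    by (intro borel_measurable_continuous_onI continuous_intros)
  from measurable_compose[OF this fB] show ?thesis by (simp add: comp_def)
qed

lemma G_meas:
  fixes f :: "(real^'n) \<times> (real^'n) \<Rightarrow> complex"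
  assumes f: "f \<in> borel_measurable (lborel \<Otimes>\<^sub>M m)"
  shows "(\<lambda>p. indicator {0<..<tminus \<Omega> (fst (fst p)) (snd (fst p))} (snd p) *\<^sub>R
               (f (fst (fst p) - snd p *\<^sub>R snd (fst p), snd (fst p)) * exp (- (lam * complex_of_real (snd p)))))
         \<in> borel_measurable ((lborel \<Otimes>\<^sub>M m) \<Otimes>\<^sub>M lborel)"
proof -
  have i: "(\<lambda>p. indicator {0<..<tminus \<Omega> (fst (fst p)) (snd (fst p))} (snd p) :: real) \<in> borel_measurable borel"
    unfolding ind_P[where z="fst _"] using borel_measurable_indicator[OF P_borel] by simp
  have e: "(\<lambda>p :: ((real^'n) \<times> (real^'n)) \<times> real. exp (- (lam * complex_of_real (snd p)))) \<in> borel_measurable borel"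
    by (intro borel_measurable_continuous_onI continuous_intros)
  have "(\<lambda>p. indicator {0<..<tminus \<Omega> (fst (fst p)) (snd (fst p))} (snd p) *\<^sub>R
               (f (fst (fst p) - snd p *\<^sub>R snd (fst p), snd (fst p)) * exp (- (lam * complex_of_real (snd p)))))
         \<in> borel_measurable borel"
    by (intro borel_measurable_scaleR borel_measurable_times i e comp_meas[OF f])
  then show ?thesis by (subst measurable_cong_sets[OF sets_NL refl])
qed

lemma H_meas:
  fixes f :: "(real^'n) \<times> (real^'n) \<Rightarrow> complex"
  assumes f: "f \<in> borel_measurable (lborel \<Otimes>\<^sub>M m)"
  shows "(\<lambda>p. ennreal (indicator {0<..<tminus \<Omega> (fst (fst p)) (snd (fst p))} (snd p) *
               norm (f (fst (fst p) - snd p *\<^sub>R snd (fst p), snd (fst p)))))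
         \<in> borel_measurable ((lborel \<Otimes>\<^sub>M m) \<Otimes>\<^sub>M lborel)"
proof -
  have i: "(\<lambda>p. indicator {0<..<tminus \<Omega> (fst (fst p)) (snd (fst p))} (snd p) :: real) \<in> borel_measurable borel"
    unfolding ind_P[where z="fst _"] using borel_measurable_indicator[OF P_borel] by simp
  have "(\<lambda>p. ennreal (indicator {0<..<tminus \<Omega> (fst (fst p)) (snd (fst p))} (snd p) *
               norm (f (fst (fst p) - snd p *\<^sub>R snd (fst p), snd (fst p)))))
         \<in> borel_measurable borel"
    by (intro measurable_compose[OF _ measurable_ennreal] borel_measurable_times i measurable_compose[OF comp_meas[OF f] borel_measurable_norm])
  then show ?thesis by (subst measurable_cong_sets[OF sets_NL refl])
qed

lemma Rres_alt: "Rres \<Omega> lam f z = (\<integral>s. indicator {0<..<tminus \<Omega> (fst z) (snd z)} s *\<^sub>R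
     (f (fst z - s *\<^sub>R snd z, snd z) * exp (- (lam * complex_of_real s))) \<partial>lborel)"
  by (cases z) (simp add: Rres_def set_lebesgue_integral_def)

lemma Rres_meas:
  fixes f :: "(real^'n) \<times> (real^'n) \<Rightarrow> complex"
  assumes f: "f \<in> borel_measurable (lborel \<Otimes>\<^sub>M m)"
  shows "Rres \<Omega> lam f \<in> borel_measurable (lborel \<Otimes>\<^sub>M m)"
proof -
  have "(\<lambda>z. \<integral>s. indicator {0<..<tminus \<Omega> (fst z) (snd z)} s *\<^sub>R
     (f (fst z - s *\<^sub>R snd z, snd z) * exp (- (lam * complex_of_real s))) \<partial>lborel) \<in> borel_measurable (lborel \<Otimes>\<^sub>M m)"
    by (rule lborel.borel_measurable_lebesgue_integral) (use G_meas[OF f, of lam] in \<open>simp add: case_prod_beta'\<close>)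
  then show ?thesis unfolding Rres_alt[abs_def] .
qed

lemma I_meas:
  fixes f :: "(real^'n) \<times> (real^'n) \<Rightarrow> complex"
  assumes f: "f \<in> borel_measurable (lborel \<Otimes>\<^sub>M m)"
  shows "(\<lambda>z. \<integral>\<^sup>+s. ennreal (indicator {0<..<tminus \<Omega> (fst z) (snd z)} s *
               norm (f (fst z - s *\<^sub>R snd z, snd z))) \<partial>lborel) \<in> borel_measurable (lborel \<Otimes>\<^sub>M m)"
  by (rule lborel.borel_measurable_nn_integral) (use H_meas[OF f] in \<open>simp add: case_prod_beta'\<close>)

lemma supp_closed: "closed (msupport m)"
  unfolding closed_def
proof (subst open_subopen, intro ballI)
  fix v assume "v \<in> - msupport m"
  then obtain U where U: "open U" "v \<in> U" "\<not> emeasure m U > 0" unfolding msupport_def by auto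
  have "U \<subseteq> - msupport m" using U unfolding msupport_def by auto
  then show "\<exists>T. open T \<and> v \<in> T \<and> T \<subseteq> - msupport m" using U by blast
qed

lemma OS_borel: "\<Omega> \<times> msupport m \<in> sets (borel :: ((real^'n) \<times> (real^'n)) measure)"
proof -
  have e: "\<Omega> \<times> msupport m = (\<Omega> \<times> UNIV) \<inter> (UNIV \<times> msupport m)" by auto
  show ?thesis unfolding e
    by (intro sets.Int borel_open borel_closed open_Times closed_Times opn open_UNIV closed_UNIV supp_closed)
qed

lemma OS_N: "\<Omega> \<times> msupport m \<in> sets (lborel \<Otimes>\<^sub>M m)"
  using OS_borel sets_Nm by simp

lemma wt_meas: "(\<lambda>v. wt k v) \<in> borel_measurable (borel :: (real^'n) measure)"
  unfolding wt_def by measurable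

lemma wt_meas_m: "(\<lambda>v. wt k v) \<in> borel_measurable m"
  by (subst measurable_cong_sets[OF sm refl]) (rule wt_meas)

lemma pm: "pair_sigma_finite lborel m"
  by (intro pair_sigma_finite.intro sigma_finite_lborel sf_m)

lemma wt_ge1: "1 \<le> wt k v"
  unfolding wt_def by simp

lemma wt_le: assumes "v \<noteq> 0" shows "wt k v / norm v \<le> wt (Suc k) v"
proof -
  define a where "a = norm v"
  have a: "a > 0" using assms unfolding a_def by simp
  show ?thesis
  proof (cases "a \<ge> 1")
    case True
    have "a ^ k \<ge> 1" using True by (simp add: one_le_power)
    then have "1 / a ^ k \<le> 1" by simp
    then have "wt k v = 1" unfolding wt_def a_def[symmetric] by simp
    then have "wt k v / norm v \<le> 1" using True a unfolding a_def by simp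
    then show ?thesis using wt_ge1[of "Suc k" v] by linarith
  next
    case False
    then have a1: "a < 1" by simp
    have "a ^ k \<le> 1" using a a1 by (simp add: power_le_one)
    then have "1 \<le> 1 / a ^ k" using a by simp
    then have "wt k v = 1 / a ^ k" unfolding wt_def a_def[symmetric] by simp
    then have "wt k v / norm v = 1 / a ^ Suc k" unfolding a_def[symmetric] by simp
    also have "\<dots> \<le> wt (Suc k) v" unfolding wt_def a_def[symmetric] by simp
    finally show ?thesis .
  qed
qed

lemma claimA:
  fixes f :: "(real^'n) \<times> (real^'n) \<Rightarrow> complex"
  assumes fm: "f \<in> borel_measurable (lborel \<Otimes>\<^sub>M m)"
    and fin: "(\<integral>\<^sup>+z. indicator (\<Omega> \<times> msupport m) z * ennreal (wt (Suc k) (snd z) * norm (f z)) \<partial>(lborel \<Otimes>\<^sub>M m)) < \<infinity>"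
  shows "(\<integral>\<^sup>+z. indicator (\<Omega> \<times> msupport m) z * (ennreal (wt k (snd z)) * Ifun \<Omega> f z) \<partial>(lborel \<Otimes>\<^sub>M m)) < \<infinity>"
proof -
  obtain R where Rpos: "R > 0" and R: "\<Omega> \<subseteq> ball 0 R" using bounded_subset_ballD[OF bnd, of 0] by auto
  define h where "h z = indicator (\<Omega> \<times> msupport m) z * ennreal (norm (f z))" for z
  have hN: "h \<in> borel_measurable (lborel \<Otimes>\<^sub>M m)"
  proof -
    note [measurable] = fm OS_N
    show ?thesis unfolding h_def[abs_def] by measurable
  qed
  have hB: "h \<in> borel_measurable borel" using hN by (simp only: meas_conv)
  have hsec: "(\<lambda>y. h (y, v)) \<in> borel_measurable borel" for v
    by (rule measurable_compose[OF _ hB]) (intro borel_measurable_continuous_onI continuous_intros)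
  have hsupp: "h (y, v) = 0" if "y \<notin> \<Omega>" for y v using that by (simp add: h_def indicator_def)
  have \<Omega>b: "\<Omega> \<in> sets borel" using opn by (rule borel_open)
  define J where "J x v = (\<integral>\<^sup>+s. indicator \<Omega> x * indicator {0<..} s * h (x - s *\<^sub>R v, v) \<partial>lborel)" for x v
  define Q where "Q z = ennreal (wt k (snd z)) * indicator (-{0}) (snd z) * J (fst z) (snd z)" for z
  have step1: "indicator (\<Omega> \<times> msupport m) z * (ennreal (wt k (snd z)) * Ifun \<Omega> f z) \<le> Q z" for z
  proof -
    obtain x v where z: "z = (x, v)" by (metis prod.collapse)
    show ?thesis
    proof (cases "z \<in> \<Omega> \<times> msupport m \<and> v \<noteq> 0")
      case False
      moreover have "Ifun \<Omega> f (x, 0) = 0" by (simp add: Ifun_def tminus_def)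
      ultimately show ?thesis unfolding z
        by (cases "(x, v) \<in> \<Omega> \<times> msupport m") simp_all
    next
      case True
      then have x: "x \<in> \<Omega>" and vS: "v \<in> msupport m" and v: "v \<noteq> 0" using z by auto
      have "Ifun \<Omega> f z \<le> J x v"
        unfolding Ifun_def J_def z fst_conv snd_conv
      proof (rule nn_integral_mono)
        fix s :: real
        show "ennreal (indicator {0<..<tminus \<Omega> x v} s * norm (f (x - s *\<^sub>R v, v)))
              \<le> indicator \<Omega> x * indicator {0<..} s * h (x - s *\<^sub>R v, v)"
        proof (cases "0 < s \<and> s < tminus \<Omega> x v")
          case True
          then have "x - s *\<^sub>R v \<in> \<Omega>" using tm_mem(1) by blast
          then show ?thesis using True x vS by (simp add: h_def indicator_def)
        next
          case False
          then show ?thesis by (simp add: indicator_def)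
        qed
      qed
      then have "ennreal (wt k v) * Ifun \<Omega> f z \<le> ennreal (wt k v) * J x v" by (rule mult_left_mono) simp
      then show ?thesis using True unfolding Q_def z by simp
    qed
  qed
  have hc: "(\<lambda>p. h (fst (fst p) - snd p *\<^sub>R snd (fst p), snd (fst p))) \<in> borel_measurable ((lborel \<Otimes>\<^sub>M m) \<Otimes>\<^sub>M lborel)"
    using comp_meas[OF hN] by (subst measurable_cong_sets[OF sets_NL refl])
  have JN: "(\<lambda>z. J (fst z) (snd z)) \<in> borel_measurable (lborel \<Otimes>\<^sub>M m)"
    unfolding J_def
  proof (rule lborel.borel_measurable_nn_integral)
    note [measurable] = hc \<Omega>b
    show "(\<lambda>(z, s). indicator \<Omega> (fst z) * indicator {0<..} s * h (fst z - s *\<^sub>R snd z, snd z))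
          \<in> borel_measurable ((lborel \<Otimes>\<^sub>M m) \<Otimes>\<^sub>M lborel)"
      unfolding case_prod_beta' by measurable
  qed
  have c0: "- {0} \<in> sets m" unfolding sm by (intro borel_open open_Compl closed_singleton)
  have QN: "Q \<in> borel_measurable (lborel \<Otimes>\<^sub>M m)"
  proof -
    note [measurable] = JN c0 wt_meas_m
    show ?thesis unfolding Q_def[abs_def] by measurable
  qed
  have step3: "(\<integral>\<^sup>+x. Q (x, v) \<partial>lborel) \<le> (\<integral>\<^sup>+x. ennreal (2 * R) * (ennreal (wt (Suc k) v) * h (x, v)) \<partial>lborel)" for v
  proof (cases "v = 0")
    case True
    then show ?thesis by (simp add: Q_def)
  next
    case False
    have Jm: "(\<lambda>x. J x v) \<in> borel_measurable borel"
      unfolding J_def using line_F_meas[OF hsec \<Omega>b, of v v] by simp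
    have "(\<integral>\<^sup>+x. Q (x, v) \<partial>lborel) = (\<integral>\<^sup>+x. ennreal (wt k v) * J x v \<partial>lborel)"
      using False by (simp add: Q_def)
    also have "\<dots> = ennreal (wt k v) * (\<integral>\<^sup>+x. J x v \<partial>lborel)"
      by (rule nn_integral_cmult) (use Jm in simp)
    also have "\<dots> \<le> ennreal (wt k v) * (ennreal (2 * R / norm v) * (\<integral>\<^sup>+y. h (y, v) \<partial>lborel))"
      unfolding J_def
      by (rule mult_left_mono[OF line_bound[OF Rpos R False hsec hsupp \<Omega>b] zero_le])
    also have "\<dots> = ennreal (2 * R * (wt k v / norm v)) * (\<integral>\<^sup>+y. h (y, v) \<partial>lborel)"
    proof -
      have e: "wt k v * (2 * R / norm v) = 2 * R * (wt k v / norm v)" by simp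
      have "ennreal (wt k v) * (ennreal (2 * R / norm v) * (\<integral>\<^sup>+y. h (y, v) \<partial>lborel))
          = ennreal (wt k v * (2 * R / norm v)) * (\<integral>\<^sup>+y. h (y, v) \<partial>lborel)"
      proof -
        have "ennreal (wt k v * (2 * R / norm v)) = ennreal (wt k v) * ennreal (2 * R / norm v)"
          using Rpos wt_ge1[of k v] by (intro ennreal_mult) auto
        then show ?thesis by (simp only: mult.assoc)
      qed
      then show ?thesis by (simp only: e)
    qed
    also have "\<dots> \<le> ennreal (2 * R * wt (Suc k) v) * (\<integral>\<^sup>+y. h (y, v) \<partial>lborel)"
    proof -
      have "2 * R * (wt k v / norm v) \<le> 2 * R * wt (Suc k) v"
        using wt_le[OF False, of k] Rpos by (intro mult_left_mono) auto
      then show ?thesis by (rule mult_right_mono[OF ennreal_leI zero_le])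
    qed
    also have "\<dots> = (\<integral>\<^sup>+x. ennreal (2 * R * wt (Suc k) v) * h (x, v) \<partial>lborel)"
      by (rule nn_integral_cmult[symmetric]) (use hsec in simp)
    also have "\<dots> = (\<integral>\<^sup>+x. ennreal (2 * R) * (ennreal (wt (Suc k) v) * h (x, v)) \<partial>lborel)"
      using Rpos wt_ge1[of "Suc k" v] by (simp add: ennreal_mult mult.assoc)
    finally show ?thesis .
  qed
  have WN: "(\<lambda>z. ennreal (2 * R) * (ennreal (wt (Suc k) (snd z)) * h z)) \<in> borel_measurable (lborel \<Otimes>\<^sub>M m)"
  proof -
    note [measurable] = hN wt_meas_m
    show ?thesis by measurable
  qed
  have "(\<integral>\<^sup>+z. indicator (\<Omega> \<times> msupport m) z * (ennreal (wt k (snd z)) * Ifun \<Omega> f z) \<partial>(lborel \<Otimes>\<^sub>M m))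
        \<le> (\<integral>\<^sup>+z. Q z \<partial>(lborel \<Otimes>\<^sub>M m))"
    by (intro nn_integral_mono step1)
  also have "\<dots> = (\<integral>\<^sup>+v. (\<integral>\<^sup>+x. Q (x, v) \<partial>lborel) \<partial>m)"
    by (rule pair_sigma_finite.nn_integral_snd[OF pm QN, symmetric])
  also have "\<dots> \<le> (\<integral>\<^sup>+v. (\<integral>\<^sup>+x. ennreal (2 * R) * (ennreal (wt (Suc k) v) * h (x, v)) \<partial>lborel) \<partial>m)"
    by (intro nn_integral_mono step3)
  also have "\<dots> = (\<integral>\<^sup>+z. ennreal (2 * R) * (ennreal (wt (Suc k) (snd z)) * h z) \<partial>(lborel \<Otimes>\<^sub>M m))"
    using pair_sigma_finite.nn_integral_snd[OF pm WN] by simp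
  also have "\<dots> = ennreal (2 * R) * (\<integral>\<^sup>+z. ennreal (wt (Suc k) (snd z)) * h z \<partial>(lborel \<Otimes>\<^sub>M m))"
  proof (rule nn_integral_cmult)
    note [measurable] = hN wt_meas_m
    show "(\<lambda>z. ennreal (wt (Suc k) (snd z)) * h z) \<in> borel_measurable (lborel \<Otimes>\<^sub>M m)" by measurable
  qed
  also have "(\<integral>\<^sup>+z. ennreal (wt (Suc k) (snd z)) * h z \<partial>(lborel \<Otimes>\<^sub>M m))
     = (\<integral>\<^sup>+z. indicator (\<Omega> \<times> msupport m) z * ennreal (wt (Suc k) (snd z) * norm (f z)) \<partial>(lborel \<Otimes>\<^sub>M m))"
  proof (intro nn_integral_cong)
    fix z :: "(real^'n) \<times> (real^'n)"
    have e: "ennreal (wt (Suc k) (snd z) * norm (f z)) = ennreal (wt (Suc k) (snd z)) * ennreal (norm (f z))"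
      using wt_ge1[of "Suc k" "snd z"] by (intro ennreal_mult) auto
    show "ennreal (wt (Suc k) (snd z)) * h z = indicator (\<Omega> \<times> msupport m) z * ennreal (wt (Suc k) (snd z) * norm (f z))"
      unfolding h_def e by (simp only: ac_simps)
  qed
  finally have le: "(\<integral>\<^sup>+z. indicator (\<Omega> \<times> msupport m) z * (ennreal (wt k (snd z)) * Ifun \<Omega> f z) \<partial>(lborel \<Otimes>\<^sub>M m))
       \<le> ennreal (2 * R) * (\<integral>\<^sup>+z. indicator (\<Omega> \<times> msupport m) z * ennreal (wt (Suc k) (snd z) * norm (f z)) \<partial>(lborel \<Otimes>\<^sub>M m))" .
  have "ennreal (2 * R) * (\<integral>\<^sup>+z. indicator (\<Omega> \<times> msupport m) z * ennreal (wt (Suc k) (snd z) * norm (f z)) \<partial>(lborel \<Otimes>\<^sub>M m)) < \<infinity>"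
    using fin by (simp add: ennreal_mult_less_top)
  with le show ?thesis by (rule le_less_trans)
qed

lemma normG_le:
  fixes f :: "(real^'n) \<times> (real^'n) \<Rightarrow> complex"
  assumes "0 \<le> Re lam"
  shows "norm (indicator {0<..<tminus \<Omega> x v} s *\<^sub>R (f (x - s *\<^sub>R v, v) * exp (- (lam * complex_of_real s))))
         \<le> indicator {0<..<tminus \<Omega> x v} s * norm (f (x - s *\<^sub>R v, v))"
proof (cases "s \<in> {0<..<tminus \<Omega> x v}")
  case True
  then have s: "s > 0" by simp
  have "Re (- (lam * complex_of_real s)) = - (Re lam * s)" by simp
  moreover have "Re lam * s \<ge> 0" using assms s by simp
  ultimately have "norm (exp (- (lam * complex_of_real s))) \<le> 1" by simp
  then have "norm (f (x - s *\<^sub>R v, v)) * norm (exp (- (lam * complex_of_real s))) \<le> norm (f (x - s *\<^sub>R v, v))"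
    by (simp add: mult_left_le)
  then show ?thesis using True by (simp add: norm_mult)
next
  case False
  then show ?thesis by simp
qed

lemma Rres_le_I:
  fixes f :: "(real^'n) \<times> (real^'n) \<Rightarrow> complex"
  assumes "0 \<le> Re lam"
  shows "ennreal (norm (Rres \<Omega> lam f z)) \<le> Ifun \<Omega> f z"
proof (cases "integrable lborel (\<lambda>s. indicator {0<..<tminus \<Omega> (fst z) (snd z)} s *\<^sub>R
     (f (fst z - s *\<^sub>R snd z, snd z) * exp (- (lam * complex_of_real s))))")
  case True
  have "ennreal (norm (Rres \<Omega> lam f z)) \<le> (\<integral>\<^sup>+s. norm (indicator {0<..<tminus \<Omega> (fst z) (snd z)} s *\<^sub>R
     (f (fst z - s *\<^sub>R snd z, snd z) * exp (- (lam * complex_of_real s)))) \<partial>lborel)"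
    unfolding Rres_alt by (rule integral_norm_bound_ennreal[OF True])
  also have "\<dots> \<le> Ifun \<Omega> f z"
    unfolding Ifun_def by (intro nn_integral_mono ennreal_leI normG_le[OF assms])
  finally show ?thesis .
next
  case False
  then show ?thesis unfolding Rres_alt by (simp add: not_integrable_integral_eq)
qed

lemma Rres_conv:
  fixes f :: "(real^'n) \<times> (real^'n) \<Rightarrow> complex" and S :: "nat \<Rightarrow> real"
  assumes fm: "f \<in> borel_measurable (lborel \<Otimes>\<^sub>M m)"
    and S: "\<And>n. 0 < S n" "S \<longlonglongrightarrow> 0" and fin: "Ifun \<Omega> f z \<noteq> \<infinity>"
  shows "(\<lambda>n. Rres \<Omega> (complex_of_real (S n) + \<i> * complex_of_real \<eta>) f z) \<longlonglongrightarrow> Rres \<Omega> (\<i> * complex_of_real \<eta>) f z"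
proof -
  let ?t = "tminus \<Omega> (fst z) (snd z)"
  let ?G = "\<lambda>lam s. indicator {0<..<?t} s *\<^sub>R (f (fst z - s *\<^sub>R snd z, snd z) * exp (- (lam * complex_of_real s)))"
  let ?w = "\<lambda>s. indicator {0<..<?t} s * norm (f (fst z - s *\<^sub>R snd z, snd z))"
  have Gm: "?G lam \<in> borel_measurable lborel" for lam
    using measurable_Pair2[OF G_meas[OF fm, of lam], of z] by (simp add: space_pair_measure space_m)
  have wm: "?w \<in> borel_measurable lborel"
    using measurable_Pair2[OF H_meas[OF fm], of z] by (simp add: space_pair_measure space_m)
  have wi: "integrable lborel ?w"
  proof (rule integrableI_bounded[OF wm])
    have "(\<integral>\<^sup>+s. ennreal (norm (?w s)) \<partial>lborel) = Ifun \<Omega> f z"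
      unfolding Ifun_def by (intro nn_integral_cong) simp
    then show "(\<integral>\<^sup>+s. ennreal (norm (?w s)) \<partial>lborel) < \<infinity>" using fin by (simp add: top.not_eq_extremum)
  qed
  have "(\<lambda>n. integral\<^sup>L lborel (?G (complex_of_real (S n) + \<i> * complex_of_real \<eta>))) \<longlonglongrightarrow> integral\<^sup>L lborel (?G (\<i> * complex_of_real \<eta>))"
  proof (rule integral_dominated_convergence[OF Gm Gm wi])
    show "AE s in lborel. (\<lambda>n. ?G (complex_of_real (S n) + \<i> * complex_of_real \<eta>) s) \<longlonglongrightarrow> ?G (\<i> * complex_of_real \<eta>) s"
    proof (intro AE_I2)
      fix s :: real
      have hh: "(\<lambda>n. complex_of_real (S n)) \<longlonglongrightarrow> 0"
        using tendsto_of_real[OF S(2), where 'a=complex] by simp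
      have ex: "(\<lambda>n. exp (- ((complex_of_real (S n) + \<i> * complex_of_real \<eta>) * complex_of_real s))) \<longlonglongrightarrow> exp (- ((0 + \<i> * complex_of_real \<eta>) * complex_of_real s))"
        by (intro tendsto_intros hh)
      show "(\<lambda>n. ?G (complex_of_real (S n) + \<i> * complex_of_real \<eta>) s) \<longlonglongrightarrow> ?G (\<i> * complex_of_real \<eta>) s"
        using tendsto_scaleR[OF tendsto_const tendsto_mult[OF tendsto_const ex]] by simp
    qed
    fix n
    show "AE s in lborel. norm (?G (complex_of_real (S n) + \<i> * complex_of_real \<eta>) s) \<le> ?w s"
      using S(1)[of n] by (intro AE_I2 normG_le) simp
  qed
  then show ?thesis unfolding Rres_alt .
qed

lemma enn_le_self: "ennreal (enn2real r) \<le> r"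
  by (simp add: ennreal_enn2real_if)

lemma main_k:
  fixes f :: "(real^'n) \<times> (real^'n) \<Rightarrow> complex"
  assumes f: "inX \<Omega> m (k + 1) f"
  shows "inX \<Omega> m k (Rres \<Omega> (\<i> * of_real \<eta>) f) \<and>
     ((\<lambda>\<epsilon>. Xnorm \<Omega> m k (\<lambda>z. Rres \<Omega> (of_real \<epsilon> + \<i> * of_real \<eta>) f z
                                      - Rres \<Omega> (\<i> * of_real \<eta>) f z)) \<longlongrightarrow> 0) (at_right 0)"
proof -
  have fm: "f \<in> borel_measurable (lborel \<Otimes>\<^sub>M m)"
    and fin0: "(\<integral>\<^sup>+ z. indicator (\<Omega> \<times> msupport m) z * ennreal (wt (Suc k) (snd z) * norm (f z)) \<partial>(lborel \<Otimes>\<^sub>M m)) < \<infinity>"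
    using f unfolding inX_def by auto
  have CA: "(\<integral>\<^sup>+z. indicator (\<Omega> \<times> msupport m) z * (ennreal (wt k (snd z)) * Ifun \<Omega> f z) \<partial>(lborel \<Otimes>\<^sub>M m)) < \<infinity>"
    by (rule claimA[OF fm fin0])
  have IN: "Ifun \<Omega> f \<in> borel_measurable (lborel \<Otimes>\<^sub>M m)"
    using I_meas[OF fm] unfolding Ifun_def[abs_def] .
  have gN: "(\<lambda>z. indicator (\<Omega> \<times> msupport m) z * (ennreal (wt k (snd z)) * Ifun \<Omega> f z)) \<in> borel_measurable (lborel \<Otimes>\<^sub>M m)"
  proof -
    note [measurable] = IN OS_N wt_meas_m
    show ?thesis by measurable
  qed
  have ptw: "indicator (\<Omega> \<times> msupport m) z * ennreal (wt k (snd z) * norm (Rres \<Omega> lam f z))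
      \<le> indicator (\<Omega> \<times> msupport m) z * (ennreal (wt k (snd z)) * Ifun \<Omega> f z)" if lam: "0 \<le> Re lam" for z lam
  proof -
    have "ennreal (wt k (snd z) * norm (Rres \<Omega> lam f z)) = ennreal (wt k (snd z)) * ennreal (norm (Rres \<Omega> lam f z))"
      using wt_ge1[of k "snd z"] by (intro ennreal_mult) auto
    also have "\<dots> \<le> ennreal (wt k (snd z)) * Ifun \<Omega> f z"
      by (rule mult_left_mono[OF Rres_le_I[OF lam] zero_le])
    finally show ?thesis by (rule mult_left_mono[OF _ zero_le])
  qed
  have part1: "inX \<Omega> m k (Rres \<Omega> (\<i> * of_real \<eta>) f)"
    unfolding inX_def
  proof
    show "Rres \<Omega> (\<i> * complex_of_real \<eta>) f \<in> borel_measurable (lborel \<Otimes>\<^sub>M m)" by (rule Rres_meas[OF fm])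
    have "(\<integral>\<^sup>+ z. indicator (\<Omega> \<times> msupport m) z * ennreal (wt k (snd z) * norm (Rres \<Omega> (\<i> * complex_of_real \<eta>) f z)) \<partial>(lborel \<Otimes>\<^sub>M m))
        \<le> (\<integral>\<^sup>+z. indicator (\<Omega> \<times> msupport m) z * (ennreal (wt k (snd z)) * Ifun \<Omega> f z) \<partial>(lborel \<Otimes>\<^sub>M m))"
      by (intro nn_integral_mono ptw) simp
    then show "(\<integral>\<^sup>+ z. indicator (\<Omega> \<times> msupport m) z * ennreal (wt k (snd z) * norm (Rres \<Omega> (\<i> * complex_of_real \<eta>) f z)) \<partial>(lborel \<Otimes>\<^sub>M m)) < \<infinity>"
      using CA by (rule le_less_trans)
  qed
  have AEfin: "AE z in lborel \<Otimes>\<^sub>M m. z \<in> \<Omega> \<times> msupport m \<longrightarrow> Ifun \<Omega> f z \<noteq> \<infinity>"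
  proof -
    have "AE z in lborel \<Otimes>\<^sub>M m. indicator (\<Omega> \<times> msupport m) z * (ennreal (wt k (snd z)) * Ifun \<Omega> f z) \<noteq> \<infinity>"
      using CA by (intro nn_integral_PInf_AE gN) simp
    then show ?thesis
    proof (rule AE_mp, intro AE_I2 impI)
      fix z assume a: "indicator (\<Omega> \<times> msupport m) z * (ennreal (wt k (snd z)) * Ifun \<Omega> f z) \<noteq> \<infinity>"
        and z: "z \<in> \<Omega> \<times> msupport m"
      have "ennreal (wt k (snd z)) \<noteq> 0" using wt_ge1[of k "snd z"] by simp
      then show "Ifun \<Omega> f z \<noteq> \<infinity>" using a z by (auto simp: ennreal_mult_eq_top_iff)
    qed
  qed
  have part2: "((\<lambda>\<epsilon>. Xnorm \<Omega> m k (\<lambda>z. Rres \<Omega> (of_real \<epsilon> + \<i> * of_real \<eta>) f z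
                                      - Rres \<Omega> (\<i> * of_real \<eta>) f z)) \<longlongrightarrow> 0) (at_right 0)"
  proof (rule tendsto_at_right_sequentially[of 0 1])
    fix S :: "nat \<Rightarrow> real"
    assume S0: "\<And>n. 0 < S n" and S1: "\<And>n. S n < 1" and Sd: "decseq S" and Sl: "S \<longlonglongrightarrow> 0"
    define D where "D n z = Rres \<Omega> (of_real (S n) + \<i> * of_real \<eta>) f z - Rres \<Omega> (\<i> * of_real \<eta>) f z" for n z
    define u where "u n z = complex_of_real (indicator (\<Omega> \<times> msupport m) z * wt k (snd z)) * D n z" for n z
    define w where "w z = 2 * (indicator (\<Omega> \<times> msupport m) z * wt k (snd z) * enn2real (Ifun \<Omega> f z))" for z
    have um: "u n \<in> borel_measurable (lborel \<Otimes>\<^sub>M m)" for n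
    proof -
      note [measurable] = Rres_meas[OF fm] OS_N wt_meas_m
      show ?thesis unfolding u_def[abs_def] D_def[abs_def] by measurable
    qed
    have wm: "w \<in> borel_measurable (lborel \<Otimes>\<^sub>M m)"
    proof -
      note [measurable] = IN OS_N wt_meas_m
      show ?thesis unfolding w_def[abs_def] by measurable
    qed
    have bnd: "AE z in lborel \<Otimes>\<^sub>M m. norm (u n z) \<le> w z" for n
      using AEfin
    proof (rule AE_mp, intro AE_I2 impI)
      fix z assume a: "z \<in> \<Omega> \<times> msupport m \<longrightarrow> Ifun \<Omega> f z \<noteq> \<infinity>"
      show "norm (u n z) \<le> w z"
      proof (cases "z \<in> \<Omega> \<times> msupport m")
        case False
        then show ?thesis by (simp add: u_def w_def)
      next
        case True
        then have It: "Ifun \<Omega> f z < top" using a by (simp add: top.not_eq_extremum)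
        have nb: "norm (Rres \<Omega> lam f z) \<le> enn2real (Ifun \<Omega> f z)" if "0 \<le> Re lam" for lam
          using enn2real_mono[OF Rres_le_I[OF that] It] by simp
        have "norm (D n z) \<le> norm (Rres \<Omega> (of_real (S n) + \<i> * of_real \<eta>) f z) + norm (Rres \<Omega> (\<i> * of_real \<eta>) f z)"
          unfolding D_def by (rule norm_triangle_ineq4)
        also have "\<dots> \<le> 2 * enn2real (Ifun \<Omega> f z)"
          using nb[of "of_real (S n) + \<i> * of_real \<eta>"] nb[of "\<i> * of_real \<eta>"] S0[of n] by simp
        finally have "wt k (snd z) * norm (D n z) \<le> wt k (snd z) * (2 * enn2real (Ifun \<Omega> f z))"
          using wt_ge1[of k "snd z"] by (intro mult_left_mono) auto
        then show ?thesis using True wt_ge1[of k "snd z"] by (simp add: u_def w_def norm_mult)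
      qed
    qed
    have wfin: "(\<integral>\<^sup>+z. w z \<partial>(lborel \<Otimes>\<^sub>M m)) < \<infinity>"
    proof -
      have "(\<integral>\<^sup>+z. w z \<partial>(lborel \<Otimes>\<^sub>M m))
          \<le> (\<integral>\<^sup>+z. 2 * (indicator (\<Omega> \<times> msupport m) z * (ennreal (wt k (snd z)) * Ifun \<Omega> f z)) \<partial>(lborel \<Otimes>\<^sub>M m))"
      proof (intro nn_integral_mono)
        fix z
        show "ennreal (w z) \<le> 2 * (indicator (\<Omega> \<times> msupport m) z * (ennreal (wt k (snd z)) * Ifun \<Omega> f z))"
        proof (cases "z \<in> \<Omega> \<times> msupport m")
          case False
          then show ?thesis by (simp add: w_def)
        next
          case True
          have "ennreal (w z) = 2 * (ennreal (wt k (snd z)) * ennreal (enn2real (Ifun \<Omega> f z)))"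
            using True wt_ge1[of k "snd z"] by (simp add: w_def ennreal_mult)
          also have "\<dots> \<le> 2 * (ennreal (wt k (snd z)) * Ifun \<Omega> f z)"
            by (intro mult_left_mono enn_le_self zero_le)
          finally show ?thesis using True by simp
        qed
      qed
      also have "\<dots> = 2 * (\<integral>\<^sup>+z. indicator (\<Omega> \<times> msupport m) z * (ennreal (wt k (snd z)) * Ifun \<Omega> f z) \<partial>(lborel \<Otimes>\<^sub>M m))"
        by (rule nn_integral_cmult[OF gN])
      also have "\<dots> < \<infinity>" using CA by (simp add: ennreal_mult_less_top)
      finally show ?thesis .
    qed
    have conv: "AE z in lborel \<Otimes>\<^sub>M m. (\<lambda>n. u n z) \<longlonglongrightarrow> 0"
      using AEfin
    proof (rule AE_mp, intro AE_I2 impI)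
      fix z assume a: "z \<in> \<Omega> \<times> msupport m \<longrightarrow> Ifun \<Omega> f z \<noteq> \<infinity>"
      show "(\<lambda>n. u n z) \<longlonglongrightarrow> 0"
      proof (cases "z \<in> \<Omega> \<times> msupport m")
        case False
        then show ?thesis by (simp add: u_def)
      next
        case True
        have "(\<lambda>n. Rres \<Omega> (complex_of_real (S n) + \<i> * complex_of_real \<eta>) f z) \<longlonglongrightarrow> Rres \<Omega> (\<i> * complex_of_real \<eta>) f z"
          using Rres_conv[OF fm S0 Sl] a True by blast
        then have "(\<lambda>n. D n z) \<longlonglongrightarrow> 0" unfolding D_def by (rule LIM_zero)
        then have "(\<lambda>n. complex_of_real (indicator (\<Omega> \<times> msupport m) z * wt k (snd z)) * D n z) \<longlonglongrightarrow>
                   complex_of_real (indicator (\<Omega> \<times> msupport m) z * wt k (snd z)) * 0"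
          by (intro tendsto_mult tendsto_const)
        then show ?thesis by (simp add: u_def)
      qed
    qed
    have lim: "(\<lambda>n. \<integral>\<^sup>+z. norm (0 - u n z) \<partial>(lborel \<Otimes>\<^sub>M m)) \<longlonglongrightarrow> 0"
      by (rule nn_integral_dominated_convergence_norm[OF um _ wm bnd wfin conv]) simp
    have eq: "Xnorm \<Omega> m k (\<lambda>z. Rres \<Omega> (of_real (S n) + \<i> * of_real \<eta>) f z - Rres \<Omega> (\<i> * of_real \<eta>) f z)
            = enn2real (\<integral>\<^sup>+z. norm (0 - u n z) \<partial>(lborel \<Otimes>\<^sub>M m))" for n
      unfolding Xnorm_def
    proof (intro arg_cong[where f=enn2real] nn_integral_cong)
      fix z
      show "indicator (\<Omega> \<times> msupport m) z * ennreal (wt k (snd z) * norm (Rres \<Omega> (of_real (S n) + \<i> * of_real \<eta>) f z - Rres \<Omega> (\<i> * of_real \<eta>) f z))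
            = ennreal (norm (0 - u n z))"
        using wt_ge1[of k "snd z"] by (cases "z \<in> \<Omega> \<times> msupport m") (simp_all add: u_def D_def norm_mult)
    qed
    have "(\<lambda>n. enn2real (\<integral>\<^sup>+z. norm (0 - u n z) \<partial>(lborel \<Otimes>\<^sub>M m))) \<longlonglongrightarrow> 0"
      using tendsto_enn2real[of _ 0] lim by simp
    then show "(\<lambda>n. Xnorm \<Omega> m k (\<lambda>z. Rres \<Omega> (of_real (S n) + \<i> * of_real \<eta>) f z - Rres \<Omega> (\<i> * of_real \<eta>) f z)) \<longlonglongrightarrow> 0"
      unfolding eq .
  qed simp
  show ?thesis using part1 part2 by blast
qed

end

theorem lemma4p3:
  fixes \<Omega> :: "(real^'n) set" and m :: "(real^'n) measure" and \<eta> :: real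
  assumes "CARD('n) \<ge> 2" and "open \<Omega>" and "bounded \<Omega>" and "C1_boundary \<Omega>"
    and "sets m = sets borel"
    and "\<And>K. compact K \<Longrightarrow> emeasure m K < \<infinity>"
    and "emeasure m {0} = 0"
  shows "(\<forall>f. inX \<Omega> m 1 f \<longrightarrow>
            inX \<Omega> m 0 (Rres \<Omega> (\<i> * of_real \<eta>) f) \<and>
            ((\<lambda>\<epsilon>. Xnorm \<Omega> m 0 (\<lambda>z. Rres \<Omega> (of_real \<epsilon> + \<i> * of_real \<eta>) f z
                                      - Rres \<Omega> (\<i> * of_real \<eta>) f z)) \<longlongrightarrow> 0) (at_right 0))
       \<and> (\<forall>k f. inX \<Omega> m (k + 1) f \<longrightarrow>
            inX \<Omega> m k (Rres \<Omega> (\<i> * of_real \<eta>) f) \<and>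
            ((\<lambda>\<epsilon>. Xnorm \<Omega> m k (\<lambda>z. Rres \<Omega> (of_real \<epsilon> + \<i> * of_real \<eta>) f z
                                      - Rres \<Omega> (\<i> * of_real \<eta>) f z)) \<longlongrightarrow> 0) (at_right 0))"
proof -
  have mk: "\<And>k f. inX \<Omega> m (k + 1) f \<Longrightarrow> inX \<Omega> m k (Rres \<Omega> (\<i> * of_real \<eta>) f) \<and>
            ((\<lambda>\<epsilon>. Xnorm \<Omega> m k (\<lambda>z. Rres \<Omega> (of_real \<epsilon> + \<i> * of_real \<eta>) f z
                                      - Rres \<Omega> (\<i> * of_real \<eta>) f z)) \<longlongrightarrow> 0) (at_right 0)"
    by (rule main_k[OF assms(3) assms(2) assms(5) assms(6)])
  show ?thesis
  proof (rule conjI)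
    show "\<forall>k f. inX \<Omega> m (k + 1) f \<longrightarrow> inX \<Omega> m k (Rres \<Omega> (\<i> * of_real \<eta>) f) \<and>
            ((\<lambda>\<epsilon>. Xnorm \<Omega> m k (\<lambda>z. Rres \<Omega> (of_real \<epsilon> + \<i> * of_real \<eta>) f z
                                      - Rres \<Omega> (\<i> * of_real \<eta>) f z)) \<longlongrightarrow> 0) (at_right 0)"
      using mk by blast
    show "\<forall>f. inX \<Omega> m 1 f \<longrightarrow> inX \<Omega> m 0 (Rres \<Omega> (\<i> * of_real \<eta>) f) \<and>
            ((\<lambda>\<epsilon>. Xnorm \<Omega> m 0 (\<lambda>z. Rres \<Omega> (of_real \<epsilon> + \<i> * of_real \<eta>) f z
                                      - Rres \<Omega> (\<i> * of_real \<eta>) f z)) \<longlongrightarrow> 0) (at_right 0)"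
    proof (intro allI impI)
      fix f assume "inX \<Omega> m 1 f"
      then have "inX \<Omega> m (0 + 1) f" by simp
      then show "inX \<Omega> m 0 (Rres \<Omega> (\<i> * of_real \<eta>) f) \<and>
            ((\<lambda>\<epsilon>. Xnorm \<Omega> m 0 (\<lambda>z. Rres \<Omega> (of_real \<epsilon> + \<i> * of_real \<eta>) f z
                                      - Rres \<Omega> (\<i> * of_real \<eta>) f z)) \<longlongrightarrow> 0) (at_right 0)"
        by (rule mk)
    qed
  qed
qed

end
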